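(* Let $(\mathcal G,\mathcal D,\{\mathcal D_1,\ldots,\mathcal D_n\})$ be a minimal decomposition of a closed triangulated surface $\mathcal T$. Then every triangle of $\mathcal G$ intersects the boundary $\partial\mathcal G$ of $\mathcal G$.
   Context: A triangulated surface is a finite simplicial complex whose underlying space is a connected compact surface; it is closed if the surface has empty boundary; $\partial$ denotes the induced triangulation of the boundary. The valence of a vertex is the number of triangles containing it. A decomposition of a closed triangulated surface $\mathcal T$ is a triple $(\mathcal G,\mathcal D,\{\mathcal D_1,\ldots,\mathcal D_n\})$, $n\geq0$, of sub-triangulations (subcomplexes which are triangulated surfaces) of $\mathcal T$ such that $\mathcal D,\mathcal D_1,\ldots,\mathcal D_n$ are triangulated discs, the interior of $\mathcal D$ contains a vertex of maximal valence in $\mathcal T$, their union is $\mathcal T$, and any two of them intersect in a triangulated circle or not at all. A decomposition is minimal if the number of triangles of $\mathcal G$ is minimal among all decompositions of $\mathcal T$. *)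

theory Defs
  imports Main
begin

text \<open>Combinatorial (abstract) simplicial complexes.  A 2-dimensional pure complex
is represented by its set of triangles (3-element vertex sets); its faces are the
nonempty subsets of triangles.\<close>

definition graph_connected :: "'a set \<Rightarrow> 'a set set \<Rightarrow> bool" where
  "graph_connected V E \<longleftrightarrow>
     (\<forall>u\<in>V. \<forall>w\<in>V. (u, w) \<in> ({(x, y). {x, y} \<in> E})\<^sup>*)"

definition verts :: "'a set set \<Rightarrow> 'a set" where
  "verts K = \<Union>K"

definition edges :: "'a set set \<Rightarrow> 'a set set" where
  "edges K = {e. card e = 2 \<and> (\<exists>t\<in>K. e \<subseteq> t)}"

definition tris_at_edge :: "'a set set \<Rightarrow> 'a set \<Rightarrow> 'a set set" where
  "tris_at_edge K e = {t\<in>K. e \<subseteq> t}"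

definition vlink :: "'a set set \<Rightarrow> 'a \<Rightarrow> 'a set set" where
  "vlink K v = {t - {v} | t. t \<in> K \<and> v \<in> t}"

text \<open>Triangulated (connected, compact) surface, combinatorially: every edge lies in
one or two triangles, every vertex link is connected (so it is a path or a cycle),
and the complex is connected.\<close>
definition triangulated_surface :: "'a set set \<Rightarrow> bool" where
  "triangulated_surface K \<longleftrightarrow>
     finite K \<and> K \<noteq> {} \<and> (\<forall>t\<in>K. card t = 3) \<and>
     (\<forall>e\<in>edges K. card (tris_at_edge K e) = 1 \<or> card (tris_at_edge K e) = 2) \<and>
     (\<forall>v\<in>verts K. graph_connected (\<Union>(vlink K v)) (vlink K v)) \<and>
     graph_connected (verts K) (edges K)"

definition closed_surface :: "'a set set \<Rightarrow> bool" where
  "closed_surface K \<longleftrightarrow> triangulated_surface K \<and>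
     (\<forall>e\<in>edges K. card (tris_at_edge K e) = 2)"

definition boundary_edges :: "'a set set \<Rightarrow> 'a set set" where
  "boundary_edges K = {e\<in>edges K. card (tris_at_edge K e) = 1}"

definition boundary_verts :: "'a set set \<Rightarrow> 'a set" where
  "boundary_verts K = \<Union>(boundary_edges K)"

definition valence :: "'a set set \<Rightarrow> 'a \<Rightarrow> nat" where
  "valence K v = card {t\<in>K. v \<in> t}"

definition euler_char :: "'a set set \<Rightarrow> int" where
  "euler_char K = int (card (verts K)) - int (card (edges K)) + int (card K)"

text \<open>Triangulated disc: a triangulated surface with nonempty boundary and Euler
characteristic 1 (by the classification of compact surfaces this is exactly a disc).\<close>
definition tri_disc :: "'a set set \<Rightarrow> bool" where
  "tri_disc K \<longleftrightarrow> triangulated_surface K \<and> boundary_edges K \<noteq> {} \<and> euler_char K = 1"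

definition faces :: "'a set set \<Rightarrow> 'a set set" where
  "faces K = {s. s \<noteq> {} \<and> (\<exists>t\<in>K. s \<subseteq> t)}"

definition tri_circle :: "'a set set \<Rightarrow> bool" where
  "tri_circle C \<longleftrightarrow> finite C \<and> C \<noteq> {} \<and>
     (\<forall>s\<in>C. card s = 1 \<or> card s = 2) \<and>
     (\<forall>s\<in>C. \<forall>x\<in>s. {x} \<in> C) \<and>
     (\<forall>x. {x} \<in> C \<longrightarrow> card {e\<in>C. card e = 2 \<and> x \<in> e} = 2) \<and>
     graph_connected (\<Union>C) {e\<in>C. card e = 2}"

definition decomposition :: "'a set set \<Rightarrow> 'a set set \<Rightarrow> 'a set set \<Rightarrow> 'a set set list \<Rightarrow> bool" where
  "decomposition T G D Ds \<longleftrightarrow>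
     closed_surface T \<and>
     G \<subseteq> T \<and> triangulated_surface G \<and>
     D \<subseteq> T \<and> tri_disc D \<and>
     (\<forall>Di\<in>set Ds. Di \<subseteq> T \<and> tri_disc Di) \<and>
     (\<exists>v\<in>verts D - boundary_verts D. \<forall>w\<in>verts T. valence T w \<le> valence T v) \<and>
     G \<union> D \<union> \<Union>(set Ds) = T \<and>
     (let L = G # D # Ds in
       \<forall>i j. i < j \<and> j < length L \<longrightarrow>
         faces (L ! i) \<inter> faces (L ! j) = {} \<or> tri_circle (faces (L ! i) \<inter> faces (L ! j)))"

definition minimal_decomposition :: "'a set set \<Rightarrow> 'a set set \<Rightarrow> 'a set set \<Rightarrow> 'a set set list \<Rightarrow> bool" where
  "minimal_decomposition T G D Ds \<longleftrightarrow> decomposition T G D Ds \<and>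
     (\<forall>G' D' Ds'. decomposition T G' D' Ds' \<longrightarrow> card G \<le> card G')"

end

theory Submission
  imports Defs
begin


lemma card2_obtain: "card f = 2 \<Longrightarrow> x \<in> f \<Longrightarrow> \<exists>y. y \<noteq> x \<and> f = {x,y}"
  by (metis card_2_iff insertE insert_commute singletonD)

lemma rtrancl_sym_swap:
  assumes "sym R" "(x,y) \<in> R\<^sup>*" shows "(y,x) \<in> R\<^sup>*"
  using assms(2)
proof induction
  case base then show ?case by simp
next
  case (step y z)
  then have "(z,y) \<in> R" using assms(1) by (meson symD)
  then show ?case using step by (meson converse_rtrancl_into_rtrancl)
qed

lemma remove_edge_connected:
  fixes E :: "'a set set"
  assumes fin: "finite E" and c2: "\<forall>f\<in>E. card f = 2"
    and conn: "graph_connected (\<Union>E) E"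
    and deg: "\<forall>x\<in>\<Union>E. card {f\<in>E. x \<in> f} = 2"
    and eE: "e \<in> E"
  shows "\<Union>(E - {e}) = \<Union>E \<and> graph_connected (\<Union>E) (E - {e})"
proof -
  have finU: "finite (\<Union>E)" using fin c2 by (metis card.infinite finite_Union zero_neq_numeral)
  have U: "\<Union>(E - {e}) = \<Union>E"
  proof
    show "\<Union>E \<subseteq> \<Union>(E - {e})"
    proof
      fix x assume x: "x \<in> \<Union>E"
      have "card {f\<in>E. x \<in> f} = 2" using deg x by blast
      then obtain f1 f2 where "f1 \<noteq> f2" "{f\<in>E. x \<in> f} = {f1,f2}"
        by (meson card_2_iff)
      then have "f1 \<in> E" "f2 \<in> E" "x \<in> f1" "x \<in> f2" by blast+
      then show "x \<in> \<Union>(E - {e})" using \<open>f1 \<noteq> f2\<close> by blast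
    qed
  qed auto
  obtain a b where ab: "a \<noteq> b" "e = {a,b}" using c2 eE by (meson card_2_iff)
  define R' where "R' = {(x,y). {x,y} \<in> E - {e}}"
  have symR': "sym R'" unfolding R'_def sym_def by (auto simp: insert_commute)
  define C where "C = {x. (a,x) \<in> R'\<^sup>*}"
  have aU: "a \<in> \<Union>E" "b \<in> \<Union>E" using ab eE by auto
  have CU: "C \<subseteq> \<Union>E"
  proof
    fix x assume "x \<in> C"
    then have "(a,x) \<in> R'\<^sup>*" by (simp add: C_def)
    then show "x \<in> \<Union>E"
    proof induction
      case base then show ?case using aU by simp
    next
      case (step y z) then show ?case by (auto simp: R'_def)
    qed
  qed
  have finC: "finite C" using CU finU finite_subset by blast
  have aC: "a \<in> C" by (simp add: C_def)
  have bC: "b \<in> C"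
  proof (rule ccontr)
    assume nb: "b \<notin> C"
    define F where "F = {f \<in> E - {e}. f \<subseteq> C}"
    have finF: "finite F" using fin by (simp add: F_def)
    have inc: "\<And>x. x \<in> C \<Longrightarrow> {f\<in>F. x \<in> f} = {f\<in>E - {e}. x \<in> f}"
    proof -
      fix x assume xC: "x \<in> C"
      show "{f\<in>F. x \<in> f} = {f\<in>E - {e}. x \<in> f}"
      proof
        show "{f\<in>E - {e}. x \<in> f} \<subseteq> {f\<in>F. x \<in> f}"
        proof
          fix f assume f: "f \<in> {f\<in>E - {e}. x \<in> f}"
          then have fE: "f \<in> E" and xf: "x \<in> f" by auto
          have "card f = 2" using c2 fE by blast
          then obtain y where y: "y \<noteq> x" "f = {x,y}" using card2_obtain[OF _ xf] by blast
          then have "(x,y) \<in> R'" using f by (auto simp: R'_def)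
          then have "y \<in> C" using xC by (auto simp: C_def)
          then show "f \<in> {f\<in>F. x \<in> f}" using f y xC by (auto simp: F_def)
        qed
      qed (auto simp: F_def)
    qed
    have degC: "\<And>x. x \<in> C \<Longrightarrow> card {f\<in>F. x \<in> f} = (if x = a then 1 else 2)"
    proof -
      fix x assume xC: "x \<in> C"
      have xU: "x \<in> \<Union>E" using xC CU by blast
      have d: "card {f\<in>E. x \<in> f} = 2" using deg xU by blast
      show "card {f\<in>F. x \<in> f} = (if x = a then 1 else 2)"
      proof (cases "x = a")
        case True
        have "{f\<in>E - {e}. x \<in> f} = {f\<in>E. x \<in> f} - {e}" by auto
        moreover have "e \<in> {f\<in>E. x \<in> f}" using True ab eE by auto
        ultimately have "card {f\<in>E - {e}. x \<in> f} = 1" using d fin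
          by (simp add: card_Diff_singleton)
        then show ?thesis using inc[OF xC] True by simp
      next
        case False
        have "x \<noteq> b" using xC nb by auto
        then have "{f\<in>E - {e}. x \<in> f} = {f\<in>E. x \<in> f}" using False ab by auto
        then show ?thesis using inc[OF xC] d False by simp
      qed
    qed
    have "sum (\<lambda>x. card {f\<in>F. x \<in> f}) C = 2 * card F"
    proof (rule sum_multicount[OF finC finF], intro ballI)
      fix f assume fF: "f \<in> F"
      then have "{x\<in>C. x \<in> f} = f" by (auto simp: F_def)
      moreover have "card f = 2" using fF c2 by (auto simp: F_def)
      ultimately show "card {x\<in>C. x \<in> f} = 2" by simp
    qed
    moreover have "sum (\<lambda>x. card {f\<in>F. x \<in> f}) C = sum (\<lambda>x. if x = a then 1 else 2) C"
      using degC by (rule sum.cong[OF refl])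
    moreover have "sum (\<lambda>x. if x = a then 1 else (2::nat)) C = 1 + 2 * (card C - 1)"
    proof -
      have "sum (\<lambda>x. if x = a then 1 else (2::nat)) C = 1 + sum (\<lambda>x. if x = a then 1 else (2::nat)) (C - {a})"
        using finC aC by (simp add: sum.remove)
      also have "sum (\<lambda>x. if x = a then 1 else (2::nat)) (C - {a}) = sum (\<lambda>x. 2) (C - {a})"
        by (rule sum.cong) auto
      also have "\<dots> = 2 * (card C - 1)" using finC aC by simp
      finally show ?thesis .
    qed
    ultimately have "1 + 2 * (card C - 1) = 2 * card F" by simp
    then show False by presburger
  qed
  have abR: "(a,b) \<in> R'\<^sup>*" using bC by (simp add: C_def)
  have baR: "(b,a) \<in> R'\<^sup>*" using rtrancl_sym_swap[OF symR' abR] .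
  have sub: "{(x, y). {x, y} \<in> E} \<subseteq> R'\<^sup>*"
  proof clarify
    fix x y assume xy: "{x,y} \<in> E"
    show "(x,y) \<in> R'\<^sup>*"
    proof (cases "{x,y} = e")
      case True
      then have "(x = a \<and> y = b) \<or> (x = b \<and> y = a)" using ab by (metis doubleton_eq_iff)
      then show ?thesis using abR baR by auto
    next
      case False then show ?thesis using xy by (auto simp: R'_def)
    qed
  qed
  have "graph_connected (\<Union>E) (E - {e})"
    unfolding graph_connected_def
  proof (intro ballI)
    fix u w assume "u \<in> \<Union>E" "w \<in> \<Union>E"
    then have "(u,w) \<in> ({(x, y). {x, y} \<in> E})\<^sup>*" using conn unfolding graph_connected_def by blast
    then have "(u,w) \<in> R'\<^sup>*" using rtrancl_subset_rtrancl[OF sub] by blast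
    then show "(u,w) \<in> ({(x, y). {x, y} \<in> E - {e}})\<^sup>*" by (simp add: R'_def)
  qed
  then show ?thesis using U by simp
qed



lemma card2_pairE: "card f = 2 \<Longrightarrow> u \<in> f \<Longrightarrow> w \<in> f \<Longrightarrow> u \<noteq> w \<Longrightarrow> f = {u,w}"
proof -
  assume a: "card f = 2" "u \<in> f" "w \<in> f" "u \<noteq> w"
  then obtain x y where "f = {x,y}" "x \<noteq> y" by (meson card_2_iff)
  then show ?thesis using a by auto
qed

lemma sub3: "s \<subseteq> {a,b,c} \<Longrightarrow> s \<in> {{},{a},{b},{c},{a,b},{a,c},{b,c},{a,b,c}}"
proof -
  assume s: "s \<subseteq> {a,b,c}"
  have "s = (if a\<in>s then {a} else {}) \<union> (if b\<in>s then {b} else {}) \<union> (if c\<in>s then {c} else {})"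
    using s by auto
  then show ?thesis by (simp add: insert_commute split: if_splits)
qed
lemma circ_set:
  assumes "a \<noteq> b" "a \<noteq> c" "b \<noteq> c"
  shows "{s. s \<noteq> {} \<and> s \<subseteq> {a,b,c} \<and> s \<noteq> {a,b,c}} = {{a},{b},{c},{a,b},{a,c},{b,c}}"
proof (rule set_eqI, rule iffI)
  fix s assume "s \<in> {s. s \<noteq> {} \<and> s \<subseteq> {a,b,c} \<and> s \<noteq> {a,b,c}}"
  then have h: "s \<noteq> {}" "s \<noteq> {a,b,c}" "s \<in> {{},{a},{b},{c},{a,b},{a,c},{b,c},{a,b,c}}" using sub3 by auto
  from h(3) have "s = {} \<or> s = {a} \<or> s = {b} \<or> s = {c} \<or> s = {a,b} \<or> s = {a,c} \<or> s = {b,c} \<or> s = {a,b,c}"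
    by (simp only: insert_iff empty_iff simp_thms)
  then show "s \<in> {{a},{b},{c},{a,b},{a,c},{b,c}}" using h(1,2) by (simp only: insert_iff empty_iff simp_thms)
next
  fix s assume "s \<in> {{a},{b},{c},{a,b},{a,c},{b,c}}"
  then have "s = {a} \<or> s = {b} \<or> s = {c} \<or> s = {a,b} \<or> s = {a,c} \<or> s = {b,c}"
    by (simp only: insert_iff empty_iff simp_thms)
  moreover have ne: "{a,b} \<noteq> {a,b,c}" "{a,c} \<noteq> {a,b,c}" "{b,c} \<noteq> {a,b,c}" "{a} \<noteq> {a,b,c}" "{b} \<noteq> {a,b,c}" "{c} \<noteq> {a,b,c}"
    using assms by (auto simp: set_eq_iff)
  ultimately show "s \<in> {s. s \<noteq> {} \<and> s \<subseteq> {a,b,c} \<and> s \<noteq> {a,b,c}}"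
    by (elim disjE) (simp_all add: ne)
qed

lemma circ_tri:
  assumes d: "a \<noteq> b" "a \<noteq> c" "b \<noteq> c"
  shows "tri_circle {{a},{b},{c},{a,b},{a,c},{b,c}}"
proof -
  let ?C = "{{a},{b},{c},{a,b},{a,c},{b,c}}"
  have e1: "{e\<in>?C. card e = 2 \<and> a \<in> e} = {{a,b},{a,c}}" using d by auto
  have e2: "{e\<in>?C. card e = 2 \<and> b \<in> e} = {{a,b},{b,c}}" using d by auto
  have e3: "{e\<in>?C. card e = 2 \<and> c \<in> e} = {{a,c},{b,c}}" using d by auto
  have n1: "{a,b} \<noteq> {a,c}" "{a,b} \<noteq> {b,c}" "{a,c} \<noteq> {b,c}" using d by (auto simp: doubleton_eq_iff)
  have deg: "\<forall>x. {x} \<in> ?C \<longrightarrow> card {e\<in>?C. card e = 2 \<and> x \<in> e} = 2"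
  proof (intro allI impI)
    fix x assume "{x} \<in> ?C"
    then have "x = a \<or> x = b \<or> x = c" by (auto simp: doubleton_eq_iff)
    moreover have "card {{a,b},{a,c}} = 2" "card {{a,b},{b,c}} = 2" "card {{a,c},{b,c}} = 2"
      using n1 by simp_all
    ultimately show "card {e\<in>?C. card e = 2 \<and> x \<in> e} = 2"
      by (elim disjE) (simp only: e1 e2 e3)+
  qed
  have U: "\<Union>?C = {a,b,c}" by auto
  have conn: "graph_connected (\<Union>?C) {e\<in>?C. card e = 2}"
    unfolding graph_connected_def U
  proof (intro ballI)
    fix u w assume u: "u \<in> {a,b,c}" and w: "w \<in> {a,b,c}"
    show "(u, w) \<in> {(x, y). {x, y} \<in> {e\<in>?C. card e = 2}}\<^sup>*"
    proof (cases "u = w")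
      case True then show ?thesis by simp
    next
      case False
      have "{u,w} \<in> {{a,b},{a,c},{b,c}}" using u w False by (auto simp: insert_commute)
      moreover have "card {u,w} = 2" using False by simp
      ultimately have "{u,w} \<in> {e\<in>?C. card e = 2}" by auto
      then show ?thesis by (intro r_into_rtrancl) simp
    qed
  qed
  have c12: "\<forall>s\<in>?C. card s = 1 \<or> card s = 2" using d by simp
  have sing: "\<forall>s\<in>?C. \<forall>x\<in>s. {x} \<in> ?C" by simp
  show ?thesis unfolding tri_circle_def
    by (intro conjI c12 sing deg conn) simp_all
qed

lemma disc_single:
  assumes ct: "card t = 3"
  shows "tri_disc {t}"
proof -
  obtain a b c where abc: "t = {a,b,c}" "a \<noteq> b" "a \<noteq> c" "b \<noteq> c" using ct by (meson card_3_iff)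
  have c3: "card {a,b,c} = 3" using abc by simp
  have ed: "edges {t} = {{a,b},{a,c},{b,c}}"
  proof
    show "edges {t} \<subseteq> {{a,b},{a,c},{b,c}}"
    proof
      fix e assume "e \<in> edges {t}"
      then have ce: "card e = 2" and "e \<subseteq> {a,b,c}" using abc by (auto simp: edges_def)
      then have "e \<in> {{},{a},{b},{c},{a,b},{a,c},{b,c},{a,b,c}}" using sub3 by blast
      then have "e = {} \<or> e = {a} \<or> e = {b} \<or> e = {c} \<or> e = {a,b} \<or> e = {a,c} \<or> e = {b,c} \<or> e = {a,b,c}"
        by (simp only: insert_iff empty_iff simp_thms)
      then show "e \<in> {{a,b},{a,c},{b,c}}" using ce c3 by (elim disjE) simp_all
    qed
    show "{{a,b},{a,c},{b,c}} \<subseteq> edges {t}" using abc by (auto simp: edges_def)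
  qed
  have n1: "{a,b} \<noteq> {a,c}" "{a,b} \<noteq> {b,c}" "{a,c} \<noteq> {b,c}" using abc by (auto simp: doubleton_eq_iff)
  have ce: "card (edges {t}) = 3" unfolding ed using n1 by simp
  have vt: "verts {t} = t" by (simp add: verts_def)
  have tre: "\<And>e. e \<in> edges {t} \<Longrightarrow> tris_at_edge {t} e = {t}"
    by (auto simp: tris_at_edge_def edges_def)
  have vl: "\<And>v. v \<in> t \<Longrightarrow> vlink {t} v = {t - {v}}" by (auto simp: vlink_def)
  have lk: "\<And>v. v \<in> verts {t} \<Longrightarrow> graph_connected (\<Union>(vlink {t} v)) (vlink {t} v)"
  proof -
    fix v assume "v \<in> verts {t}"
    then have v: "v \<in> t" by (simp add: vt)
    have c2: "card (t - {v}) = 2" using ct v by simp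
    show "graph_connected (\<Union>(vlink {t} v)) (vlink {t} v)"
      unfolding vl[OF v] graph_connected_def
    proof (intro ballI)
      fix u w assume "u \<in> \<Union>{t - {v}}" "w \<in> \<Union>{t - {v}}"
      then have u: "u \<in> t - {v}" and w: "w \<in> t - {v}" by auto
      show "(u, w) \<in> {(x, y). {x, y} \<in> {t - {v}}}\<^sup>*"
      proof (cases "u = w")
        case True then show ?thesis by simp
      next
        case False
        then have "{u,w} = t - {v}" using card2_pairE[OF c2 u w] by simp
        then show ?thesis by (intro r_into_rtrancl) simp
      qed
    qed
  qed
  have gc: "graph_connected (verts {t}) (edges {t})"
    unfolding graph_connected_def vt
  proof (intro ballI)
    fix u w assume u: "u \<in> t" and w: "w \<in> t"
    show "(u, w) \<in> {(x, y). {x, y} \<in> edges {t}}\<^sup>*"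
    proof (cases "u = w")
      case True then show ?thesis by simp
    next
      case False
      then have "{u,w} \<in> edges {t}" using u w by (auto simp: edges_def)
      then show ?thesis by (intro r_into_rtrancl) simp
    qed
  qed
  have edc: "\<forall>e\<in>edges {t}. card (tris_at_edge {t} e) = 1 \<or> card (tris_at_edge {t} e) = 2"
    using tre by simp
  have ts: "triangulated_surface {t}"
    unfolding triangulated_surface_def
    by (intro conjI edc gc ballI lk) (simp_all add: ct)
  have "{a,b} \<in> edges {t}" using ed by simp
  then have be: "{a,b} \<in> boundary_edges {t}" using tre by (simp add: boundary_edges_def)
  have eu: "euler_char {t} = 1" unfolding euler_char_def vt ce using ct by simp
  show ?thesis unfolding tri_disc_def using ts be eu by blast
qed



lemma card2_pair: "card f = 2 \<Longrightarrow> u \<in> f \<Longrightarrow> w \<in> f \<Longrightarrow> u \<noteq> w \<Longrightarrow> f = {u,w}"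
proof -
  assume a: "card f = 2" "u \<in> f" "w \<in> f" "u \<noteq> w"
  then obtain x y where "f = {x,y}" "x \<noteq> y" by (meson card_2_iff)
  then show ?thesis using a by auto
qed

lemma ts_finite: "triangulated_surface G \<Longrightarrow> finite G"
  by (simp add: triangulated_surface_def)

lemma ts_card3: "triangulated_surface G \<Longrightarrow> t \<in> G \<Longrightarrow> card t = 3"
  by (simp add: triangulated_surface_def)

lemma interior_edge_two:
  assumes "triangulated_surface G" "v \<notin> boundary_verts G" "e \<in> edges G" "v \<in> e"
  shows "card (tris_at_edge G e) = 2"
proof -
  have "card (tris_at_edge G e) = 1 \<or> card (tris_at_edge G e) = 2"
    using assms(1,3) by (simp add: triangulated_surface_def)
  moreover have "card (tris_at_edge G e) \<noteq> 1"
  proof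
    assume "card (tris_at_edge G e) = 1"
    then have "e \<in> boundary_edges G" using assms(3) by (simp add: boundary_edges_def)
    then show False using assms(2,4) by (auto simp: boundary_verts_def)
  qed
  ultimately show ?thesis by simp
qed

lemma tris_eq:
  assumes T: "closed_surface T" and GT: "G \<subseteq> T" and e: "e \<in> edges G"
    and c: "card (tris_at_edge G e) = 2"
  shows "tris_at_edge T e = tris_at_edge G e"
proof -
  have eT: "e \<in> edges T" using e GT by (auto simp: edges_def)
  then have cT: "card (tris_at_edge T e) = 2" using T by (simp add: closed_surface_def)
  have fT: "finite (tris_at_edge T e)" using cT by (metis card.infinite zero_neq_numeral)
  have sub: "tris_at_edge G e \<subseteq> tris_at_edge T e" using GT by (auto simp: tris_at_edge_def)
  show ?thesis using card_subset_eq[OF fT sub] c cT by simp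
qed

lemma interior_all:
  assumes T: "closed_surface T" and GT: "G \<subseteq> T" and G: "triangulated_surface G"
    and t0: "t0 \<in> G" "v \<in> t0" and nb: "v \<notin> boundary_verts G"
    and s: "s \<in> T" "v \<in> s"
  shows "s \<in> G"
proof -
  have TS: "triangulated_surface T" using T by (simp add: closed_surface_def)
  have key: "\<And>x. {v,x} \<in> edges G \<Longrightarrow> tris_at_edge T {v,x} = tris_at_edge G {v,x}"
    using tris_eq[OF T GT] interior_edge_two[OF G nb] by simp
  have vT: "v \<in> verts T" using s by (auto simp: verts_def)
  then have conn: "graph_connected (\<Union>(vlink T v)) (vlink T v)"
    using TS by (simp add: triangulated_surface_def)
  have "card t0 = 3" using ts_card3[OF G t0(1)] .
  then have "\<not> t0 \<subseteq> {v}" using card_mono[of "{v}" t0] by auto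
  then obtain u where u: "u \<in> t0" "u \<noteq> v" by blast
  have "card s = 3" using TS s(1) by (simp add: triangulated_surface_def)
  then have "\<not> s \<subseteq> {v}" using card_mono[of "{v}" s] by auto
  then obtain y where y: "y \<in> s" "y \<noteq> v" by blast
  have uL: "u \<in> \<Union>(vlink T v)" using u t0 GT by (auto simp: vlink_def)
  have yL: "y \<in> \<Union>(vlink T v)" using y s by (auto simp: vlink_def)
  have path: "(u,y) \<in> ({(x, z). {x, z} \<in> vlink T v})\<^sup>*"
    using conn uL yL unfolding graph_connected_def by blast
  have e2: "\<And>x. x \<noteq> v \<Longrightarrow> card {v,x} = 2" by simp
  have "{v,y} \<in> edges G" using path
  proof induction
    case base
    show ?case using u t0 unfolding edges_def by (auto intro!: bexI[of _ t0])
  next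
    case (step x z)
    then obtain s' where s': "s' \<in> T" "v \<in> s'" "{x,z} = s' - {v}" by (auto simp: vlink_def)
    have "s' \<in> tris_at_edge T {v,x}" using s' by (auto simp: tris_at_edge_def)
    then have s'G: "s' \<in> G" using key[OF step.IH] by (auto simp: tris_at_edge_def)
    have "z \<noteq> v" "z \<in> s'" using s'(3) by auto
    then show ?case using s'G s'(2) unfolding edges_def by (auto intro!: bexI[of _ s'])
  qed
  moreover have "s \<in> tris_at_edge T {v,y}" using s y by (auto simp: tris_at_edge_def)
  ultimately show ?thesis using key by (auto simp: tris_at_edge_def)
qed



lemma diff_eq_same: "v \<in> s \<Longrightarrow> v \<in> t \<Longrightarrow> s - {v} = t - {v} \<Longrightarrow> s = t"
  by (metis insert_Diff)

theorem mainTheorem5: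
  fixes T G D :: "'a set set" and Ds :: "'a set set list"
  assumes T: "closed_surface T"
    and md: "minimal_decomposition T G D Ds"
  shows "\<forall>t\<in>G. t \<inter> boundary_verts G \<noteq> {}"
proof (rule ccontr)
  assume "\<not> ?thesis"
  then obtain t where tG: "t \<in> G" and tb: "t \<inter> boundary_verts G = {}" by auto
  have dec: "decomposition T G D Ds" using md by (simp add: minimal_decomposition_def)
  have mn: "\<And>G' D' Ds'. decomposition T G' D' Ds' \<Longrightarrow> card G \<le> card G'"
    using md unfolding minimal_decomposition_def by blast
  have GT: "G \<subseteq> T" and G: "triangulated_surface G" and DT: "D \<subseteq> T" and Dd: "tri_disc D"
    and Dsd: "\<forall>Di\<in>set Ds. Di \<subseteq> T \<and> tri_disc Di"
    and val: "\<exists>v\<in>verts D - boundary_verts D. \<forall>w\<in>verts T. valence T w \<le> valence T v"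
    and un: "G \<union> D \<union> \<Union>(set Ds) = T"
    using dec unfolding decomposition_def by blast+
  define M where "M = D # Ds"
  have pw: "\<And>i j. i < j \<Longrightarrow> j < length (G # M) \<Longrightarrow>
      faces ((G#M) ! i) \<inter> faces ((G#M) ! j) = {} \<or> tri_circle (faces ((G#M) ! i) \<inter> faces ((G#M) ! j))"
    using dec unfolding decomposition_def Let_def M_def by blast
  have MT: "\<And>X. X \<in> set M \<Longrightarrow> X \<subseteq> T" using DT Dsd by (auto simp: M_def)
  have ct: "card t = 3" using ts_card3[OF G tG] .
  then obtain a b c where abc: "t = {a,b,c}" "a \<noteq> b" "a \<noteq> c" "b \<noteq> c" by (meson card_3_iff)
  have finG: "finite G" using ts_finite[OF G] .
  have nbv: "\<And>v. v \<in> t \<Longrightarrow> v \<notin> boundary_verts G" using tb by blast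
  have intr: "\<And>v s. v \<in> t \<Longrightarrow> s \<in> T \<Longrightarrow> v \<in> s \<Longrightarrow> s \<in> G"
    using interior_all[OF T GT G tG] nbv by blast
  have other: "\<And>e. e \<subseteq> t \<Longrightarrow> card e = 2 \<Longrightarrow> \<exists>t'\<in>G. t' \<noteq> t \<and> e \<subseteq> t'"
  proof -
    fix e assume e: "e \<subseteq> t" "card e = 2"
    then obtain v where v: "v \<in> e" by fastforce
    have eG: "e \<in> edges G" using e tG by (auto simp: edges_def)
    have "card (tris_at_edge G e) = 2" using interior_edge_two[OF G nbv eG v] v e by blast
    then obtain t1 t2 where tt: "tris_at_edge G e = {t1,t2}" "t1 \<noteq> t2" by (meson card_2_iff)
    have "t1 \<in> tris_at_edge G e" "t2 \<in> tris_at_edge G e" unfolding tt by simp_all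
    then have "t1 \<in> G" "e \<subseteq> t1" "t2 \<in> G" "e \<subseteq> t2" by (simp_all add: tris_at_edge_def)
    then show "\<exists>t'\<in>G. t' \<noteq> t \<and> e \<subseteq> t'" using tt(2) by blast
  qed
  define G' where "G' = G - {t}"
  have finG': "finite G'" using finG by (simp add: G'_def)
  have cG': "card G' = card G - 1" using finG tG by (simp add: G'_def)
  have cGpos: "card G > 0" using finG tG card_gt_0_iff by blast
  have G'G: "G' \<subseteq> G" by (auto simp: G'_def)
  obtain tab where tab: "tab \<in> G" "tab \<noteq> t" "{a,b} \<subseteq> tab"
    using other[of "{a,b}"] abc by auto
  obtain tbc where tbc: "tbc \<in> G" "tbc \<noteq> t" "{b,c} \<subseteq> tbc"
    using other[of "{b,c}"] abc by auto
  have edgesEq: "edges G' = edges G"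
  proof
    show "edges G' \<subseteq> edges G" using G'G by (auto simp: edges_def)
    show "edges G \<subseteq> edges G'"
    proof
      fix e assume "e \<in> edges G"
      then obtain t0 where t0: "t0 \<in> G" "e \<subseteq> t0" "card e = 2" by (auto simp: edges_def)
      show "e \<in> edges G'"
      proof (cases "t0 = t")
        case True
        then obtain t' where "t' \<in> G" "t' \<noteq> t" "e \<subseteq> t'" using other t0 by blast
        then show ?thesis using t0 by (auto simp: edges_def G'_def)
      next
        case False then show ?thesis using t0 by (auto simp: edges_def G'_def)
      qed
    qed
  qed
  have vertsEq: "verts G' = verts G"
  proof
    show "verts G' \<subseteq> verts G" using G'G by (auto simp: verts_def)
    have "t \<subseteq> verts G'" using tab tbc abc by (auto simp: verts_def G'_def)
    then show "verts G \<subseteq> verts G'" by (auto simp: verts_def G'_def)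
  qed
  have trisEq: "\<And>e. tris_at_edge G' e = tris_at_edge G e - {t}"
    by (auto simp: tris_at_edge_def G'_def)
  have G'surf: "triangulated_surface G'"
  proof -
    have c3: "\<forall>s\<in>G'. card s = 3" using G G'G by (auto simp: triangulated_surface_def)
    have ne: "G' \<noteq> {}" using tab by (auto simp: G'_def)
    have ec: "\<forall>e\<in>edges G'. card (tris_at_edge G' e) = 1 \<or> card (tris_at_edge G' e) = 2"
    proof
      fix e assume eG': "e \<in> edges G'"
      then have eG: "e \<in> edges G" using edgesEq by simp
      have old: "card (tris_at_edge G e) = 1 \<or> card (tris_at_edge G e) = 2"
        using G eG by (simp add: triangulated_surface_def)
      have fin: "finite (tris_at_edge G e)" using finG by (simp add: tris_at_edge_def)
      show "card (tris_at_edge G' e) = 1 \<or> card (tris_at_edge G' e) = 2"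
      proof (cases "t \<in> tris_at_edge G e")
        case True
        then have et: "e \<subseteq> t" by (simp add: tris_at_edge_def)
        have "card e = 2" using eG by (simp add: edges_def)
        then have "e \<noteq> {}" by auto
        then obtain v where v: "v \<in> e" by blast
        have vt: "v \<in> t" using v et by blast
        have "card (tris_at_edge G e) = 2" using interior_edge_two[OF G nbv[OF vt] eG v] .
        then show ?thesis using True fin by (simp add: trisEq card_Diff_singleton)
      next
        case False then show ?thesis using old by (simp add: trisEq)
      qed
    qed
    have lk: "\<forall>v\<in>verts G'. graph_connected (\<Union>(vlink G' v)) (vlink G' v)"
    proof
      fix v assume "v \<in> verts G'"
      then have vG: "v \<in> verts G" using vertsEq by simp
      have oldc: "graph_connected (\<Union>(vlink G v)) (vlink G v)" using G vG by (simp add: triangulated_surface_def)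
      show "graph_connected (\<Union>(vlink G' v)) (vlink G' v)"
      proof (cases "v \<in> t")
        case False
        then have "vlink G' v = vlink G v" by (auto simp: vlink_def G'_def)
        then show ?thesis using oldc by simp
      next
        case True
        have vl: "vlink G' v = vlink G v - {t - {v}}"
        proof
          show "vlink G' v \<subseteq> vlink G v - {t - {v}}"
          proof
            fix x assume "x \<in> vlink G' v"
            then obtain s where s: "x = s - {v}" "s \<in> G" "s \<noteq> t" "v \<in> s" by (auto simp: vlink_def G'_def)
            have "x \<noteq> t - {v}" using diff_eq_same[OF s(4) True] s by blast
            moreover have "x \<in> vlink G v" using s by (auto simp: vlink_def)
            ultimately show "x \<in> vlink G v - {t - {v}}" by blast
          qed
          show "vlink G v - {t - {v}} \<subseteq> vlink G' v"
          proof
            fix x assume x: "x \<in> vlink G v - {t - {v}}"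
            then obtain s where s: "x = s - {v}" "s \<in> G" "v \<in> s" by (auto simp: vlink_def)
            have "s \<noteq> t" using x s by blast
            then show "x \<in> vlink G' v" using s by (auto simp: vlink_def G'_def)
          qed
        qed
        let ?E = "vlink G v"
        have Eimg: "?E = (\<lambda>s. s - {v}) ` {s\<in>G. v \<in> s}" by (auto simp: vlink_def)
        have finE: "finite ?E" unfolding Eimg using finG by simp
        have c2E: "\<forall>f\<in>?E. card f = 2"
        proof
          fix f assume "f \<in> ?E"
          then obtain s where s: "f = s - {v}" "s \<in> G" "v \<in> s" by (auto simp: vlink_def)
          then show "card f = 2" using ts_card3[OF G s(2)] by simp
        qed
        have degE: "\<forall>x\<in>\<Union>?E. card {f\<in>?E. x \<in> f} = 2"
        proof
          fix x assume "x \<in> \<Union>?E"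
          then obtain s where s: "s \<in> G" "v \<in> s" "x \<in> s" "x \<noteq> v" by (auto simp: vlink_def)
          have eG: "{v,x} \<in> edges G" using s unfolding edges_def by auto
          have c2: "card (tris_at_edge G {v,x}) = 2"
            using interior_edge_two[OF G nbv[OF True] eG] by simp
          have img: "{f\<in>?E. x \<in> f} = (\<lambda>s. s - {v}) ` tris_at_edge G {v,x}"
          proof
            show "{f\<in>?E. x \<in> f} \<subseteq> (\<lambda>s. s - {v}) ` tris_at_edge G {v,x}"
            proof
              fix f assume "f \<in> {f\<in>?E. x \<in> f}"
              then obtain s' where s': "f = s' - {v}" "s' \<in> G" "v \<in> s'" "x \<in> f" by (auto simp: vlink_def)
              then have "s' \<in> tris_at_edge G {v,x}" by (auto simp: tris_at_edge_def)
              then show "f \<in> (\<lambda>s. s - {v}) ` tris_at_edge G {v,x}" using s'(1) by blast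
            qed
            show "(\<lambda>s. s - {v}) ` tris_at_edge G {v,x} \<subseteq> {f\<in>?E. x \<in> f}"
              using s(4) by (auto simp: tris_at_edge_def vlink_def)
          qed
          have inj: "inj_on (\<lambda>s. s - {v}) (tris_at_edge G {v,x})"
            by (rule inj_onI) (use diff_eq_same in \<open>auto simp: tris_at_edge_def\<close>)
          show "card {f\<in>?E. x \<in> f} = 2" unfolding img card_image[OF inj] by (rule c2)
        qed
        have eE: "t - {v} \<in> ?E" using tG True by (auto simp: vlink_def)
        have r: "\<Union>(?E - {t - {v}}) = \<Union>?E \<and> graph_connected (\<Union>?E) (?E - {t - {v}})"
          by (rule remove_edge_connected[OF finE c2E oldc degE eE])
        show ?thesis unfolding vl using r by simp
      qed
    qed
    have gc: "graph_connected (verts G') (edges G')"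
      using G unfolding edgesEq vertsEq by (simp add: triangulated_surface_def)
    show ?thesis unfolding triangulated_surface_def
      by (intro conjI finG' ne c3 ec lk gc)
  qed
  have disc: "tri_disc {t}" using disc_single[OF ct] .
  have tT: "t \<in> T" using tG GT by blast
  have disj: "\<And>X s. X \<in> set M \<Longrightarrow> s \<in> X \<Longrightarrow> s \<inter> t = {}"
  proof -
    fix X s assume X: "X \<in> set M" and s: "s \<in> X"
    show "s \<inter> t = {}"
    proof (rule ccontr)
      assume "s \<inter> t \<noteq> {}"
      then obtain v where v: "v \<in> s" "v \<in> t" by blast
      have sT: "s \<in> T" using MT[OF X] s by blast
      have sG: "s \<in> G" using intr[OF v(2) sT v(1)] .
      obtain k where k: "k < length M" "M ! k = X" using X by (meson in_set_conv_nth)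
      have "faces ((G#M) ! 0) \<inter> faces ((G#M) ! Suc k) = {} \<or> tri_circle (faces ((G#M) ! 0) \<inter> faces ((G#M) ! Suc k))"
        using pw[of 0 "Suc k"] k by simp
      then have h: "faces G \<inter> faces X = {} \<or> tri_circle (faces G \<inter> faces X)" using k by simp
      have sf: "s \<in> faces G \<inter> faces X" using sG s v by (auto simp: faces_def)
      have cs: "card s = 3" using ts_card3[OF G sG] .
      show False using h
      proof
        assume "faces G \<inter> faces X = {}" then show False using sf by blast
      next
        assume "tri_circle (faces G \<inter> faces X)"
        then have "card s = 1 \<or> card s = 2" using sf unfolding tri_circle_def by blast
        then show False using cs by simp
      qed
    qed
  qed
  have facesEq: "\<And>X. X \<in> set M \<Longrightarrow> faces G' \<inter> faces X = faces G \<inter> faces X"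
  proof -
    fix X assume X: "X \<in> set M"
    show "faces G' \<inter> faces X = faces G \<inter> faces X"
    proof
      show "faces G' \<inter> faces X \<subseteq> faces G \<inter> faces X" using G'G by (auto simp: faces_def)
      show "faces G \<inter> faces X \<subseteq> faces G' \<inter> faces X"
      proof
        fix y assume y: "y \<in> faces G \<inter> faces X"
        then obtain t0 s where t0: "t0 \<in> G" "y \<subseteq> t0" and s: "s \<in> X" "y \<subseteq> s" and ne: "y \<noteq> {}"
          by (auto simp: faces_def)
        have "s \<inter> t = {}" using disj[OF X s(1)] .
        then have "t0 \<noteq> t" using t0 s ne by blast
        then show "y \<in> faces G' \<inter> faces X" using y t0 ne by (auto simp: faces_def G'_def)
      qed
    qed
  qed
  have facesT: "\<And>X. X \<in> set M \<Longrightarrow> faces X \<inter> faces {t} = {}"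
  proof -
    fix X assume X: "X \<in> set M"
    show "faces X \<inter> faces {t} = {}"
    proof (rule ccontr)
      assume "faces X \<inter> faces {t} \<noteq> {}"
      then obtain y s where "y \<noteq> {}" "s \<in> X" "y \<subseteq> s" "y \<subseteq> t" by (auto simp: faces_def)
      then show False using disj[OF X] by blast
    qed
  qed
  have fI: "faces G' \<inter> faces {t} = {s. s \<noteq> {} \<and> s \<subseteq> {a,b,c} \<and> s \<noteq> {a,b,c}}"
  proof
    show "faces G' \<inter> faces {t} \<subseteq> {s. s \<noteq> {} \<and> s \<subseteq> {a,b,c} \<and> s \<noteq> {a,b,c}}"
    proof
      fix s assume s: "s \<in> faces G' \<inter> faces {t}"
      then obtain t0 where t0: "t0 \<in> G'" "s \<subseteq> t0" and ne: "s \<noteq> {}" and st: "s \<subseteq> t"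
        by (auto simp: faces_def)
      have "s \<noteq> t"
      proof
        assume "s = t"
        then have tt0: "t \<subseteq> t0" using t0 by simp
        have c0: "card t0 = 3" using ts_card3[OF G] t0 G'G by blast
        then have "finite t0" by (metis card.infinite zero_neq_numeral)
        then have "t = t0" using card_subset_eq[OF _ tt0] ct c0 by simp
        then show False using t0 by (simp add: G'_def)
      qed
      then show "s \<in> {s. s \<noteq> {} \<and> s \<subseteq> {a,b,c} \<and> s \<noteq> {a,b,c}}" using ne st abc by simp
    qed
    show "{s. s \<noteq> {} \<and> s \<subseteq> {a,b,c} \<and> s \<noteq> {a,b,c}} \<subseteq> faces G' \<inter> faces {t}"
    proof
      fix s assume s: "s \<in> {s. s \<noteq> {} \<and> s \<subseteq> {a,b,c} \<and> s \<noteq> {a,b,c}}"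
      then have ne: "s \<noteq> {}" and st: "s \<subseteq> t" and snt: "s \<noteq> t" using abc by auto
      then obtain x where x: "x \<in> t" "x \<notin> s" by blast
      have "card (t - {x}) = 2" using ct x by simp
      then obtain t' where t': "t' \<in> G" "t' \<noteq> t" "t - {x} \<subseteq> t'" using other[of "t - {x}"] by blast
      have t'G': "t' \<in> G'" using t' by (simp add: G'_def)
      have "s \<subseteq> t'" using st x t'(3) by blast
      then have "s \<in> faces G'" unfolding faces_def using ne t'G' by blast
      moreover have "s \<in> faces {t}" unfolding faces_def using ne st by blast
      ultimately show "s \<in> faces G' \<inter> faces {t}" by blast
    qed
  qed
  have circ: "tri_circle (faces G' \<inter> faces {t})"
    unfolding fI circ_set[OF abc(2-4)] by (rule circ_tri[OF abc(2-4)])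
  have pw': "\<And>i j. i < j \<Longrightarrow> j < length (G' # (M @ [{t}])) \<Longrightarrow>
      faces ((G' # (M @ [{t}])) ! i) \<inter> faces ((G' # (M @ [{t}])) ! j) = {} \<or>
      tri_circle (faces ((G' # (M @ [{t}])) ! i) \<inter> faces ((G' # (M @ [{t}])) ! j))"
  proof -
    fix i j assume ij: "i < j" and jl: "j < length (G' # (M @ [{t}]))"
    let ?L = "G' # (M @ [{t}])"
    obtain j' where j': "j = Suc j'" using ij by (cases j) auto
    have jM: "j' \<le> length M" using jl j' by simp
    show "faces (?L ! i) \<inter> faces (?L ! j) = {} \<or> tri_circle (faces (?L ! i) \<inter> faces (?L ! j))"
    proof (cases "j' < length M")
      case True
      have Lj: "?L ! j = M ! j'" using True j' by (simp add: nth_append)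
      have Xin: "M ! j' \<in> set M" using True by simp
      have old: "faces ((G#M) ! i) \<inter> faces ((G#M) ! j) = {} \<or> tri_circle (faces ((G#M) ! i) \<inter> faces ((G#M) ! j))"
        using pw[OF ij] True j' by simp
      show ?thesis
      proof (cases i)
        case 0
        then show ?thesis using old Lj facesEq[OF Xin] j' by simp
      next
        case (Suc i')
        have "i' < length M" using Suc ij j' True by simp
        then have "?L ! i = M ! i'" using Suc by (simp add: nth_append)
        then show ?thesis using old Lj Suc j' by simp
      qed
    next
      case False
      then have jeq: "j' = length M" using jM by simp
      then have Lj: "?L ! j = {t}" using j' by (simp add: nth_append)
      show ?thesis
      proof (cases i)
        case 0 then show ?thesis using Lj circ by simp
      next
        case (Suc i')
        then have i'M: "i' < length M" using ij j' jeq by simp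
        then have "?L ! i = M ! i'" using Suc by (simp add: nth_append)
        moreover have "M ! i' \<in> set M" using i'M by simp
        ultimately show ?thesis using Lj facesT by simp
      qed
    qed
  qed
  have un': "G' \<union> D \<union> \<Union>(set (Ds @ [{t}])) = T"
  proof -
    have "G' \<union> D \<union> \<Union>(set (Ds @ [{t}])) = G \<union> D \<union> \<Union>(set Ds)"
      using tG by (auto simp: G'_def)
    then show ?thesis using un by simp
  qed
  have "decomposition T G' D (Ds @ [{t}])"
    unfolding decomposition_def Let_def
  proof (intro conjI)
    show "closed_surface T" by (rule T)
    show "G' \<subseteq> T" using G'G GT by blast
    show "triangulated_surface G'" by (rule G'surf)
    show "D \<subseteq> T" by (rule DT)
    show "tri_disc D" by (rule Dd)
    show "\<forall>Di\<in>set (Ds @ [{t}]). Di \<subseteq> T \<and> tri_disc Di" using Dsd disc tT by auto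
    show "\<exists>v\<in>verts D - boundary_verts D. \<forall>w\<in>verts T. valence T w \<le> valence T v" by (rule val)
    show "G' \<union> D \<union> \<Union>(set (Ds @ [{t}])) = T" by (rule un')
    show "\<forall>i j. i < j \<and> j < length (G' # D # Ds @ [{t}]) \<longrightarrow>
      faces ((G' # D # Ds @ [{t}]) ! i) \<inter> faces ((G' # D # Ds @ [{t}]) ! j) = {} \<or>
      tri_circle (faces ((G' # D # Ds @ [{t}]) ! i) \<inter> faces ((G' # D # Ds @ [{t}]) ! j))"
      using pw' unfolding M_def by simp
  qed
  then have "card G \<le> card G'" by (rule mn)
  then show False using cG' cGpos by simp
qed


end
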